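(* Consider an execution of \textsf{Sieve} (described in the context) in which the sender $\sigma$ is correct and broadcasts a message $m$. If in this execution the underlying probabilistic broadcast $pb$ satisfies totality (if some correct process $pb$-delivers a message, every correct process eventually $pb$-delivers a message), and no correct process has more than $E-\hat E$ Byzantine entries in its echo sample, then every correct process eventually delivers $m$ (i.e., total validity holds in this execution).
   Context: System model: a fixed set $\Pi$ of processes, some Byzantine (arbitrary behaviour) and the rest correct, asynchronous reliable authenticated point-to-point links (messages between correct processes are eventually delivered); signatures cannot be forged. $pb$ is a probabilistic broadcast instance: correct processes $pb$-deliver at most one message; if the sender is correct, any $pb$-delivered message was broadcast by it; a correct sender $pb$-delivers its own broadcast message. \textsf{Sieve} (parameters $E$, $\hat E$): each correct process draws an echo sample of $E$ entries, each uniformly from $\Pi$ with replacement, and sends EchoSubscribe to each; it records subscribers. To broadcast $m$, $\sigma$ $pb$-broadcasts $(m,\mathrm{sign}_\sigma(m))$. Upon $pb$-delivering a correctly signed pair, a correct process sets $echo$ to it and sends Echo with that pair to all current and future subscribers. A correct process records, for each member of its echo sample, the first correctly signed Echo received from it, and delivers (once) the message of its $echo$ when at least $\hat E$ members of its echo sample have sent Echo for that same pair. *)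

theory Defs
  imports Main
begin

(* Processes: the type 'p (Pi = UNIV).  C = set of correct processes.
   Time: nat (global discrete time, used only to express "eventually").
   A signed pair is ('m \<times> 's); sign q x is the (unique, deterministic) signature
   of process q on message x; a pair (x,s) is correctly signed by \<sigma> iff s = sign \<sigma> x. *)

datatype ('m, 's) smsg = EchoSubscribe | Echo "'m \<times> 's"

definition valid_sig :: "('p \<Rightarrow> 'm \<Rightarrow> 's) \<Rightarrow> 'p \<Rightarrow> 'm \<times> 's \<Rightarrow> bool" where
  "valid_sig sign \<sigma> y \<longleftrightarrow> snd y = sign \<sigma> (fst y)"

(* snd_ev q t : set of (destination, message) sent by q at time t
   rcv_ev q t : message (origin, message) received by q at time t (at most one per step) *)

definition reliable_authenticated_links ::
  "'p set \<Rightarrow> ('p \<Rightarrow> nat \<Rightarrow> ('p \<times> ('m,'s) smsg) set)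
          \<Rightarrow> ('p \<Rightarrow> nat \<Rightarrow> ('p \<times> ('m,'s) smsg) option) \<Rightarrow> bool" where
  "reliable_authenticated_links C snd_ev rcv_ev \<longleftrightarrow>
     (\<forall>p\<in>C. \<forall>q\<in>C. \<forall>t x. (q, x) \<in> snd_ev p t \<longrightarrow> (\<exists>t'>t. rcv_ev q t' = Some (p, x))) \<and>
     (\<forall>p\<in>C. \<forall>q\<in>C. \<forall>t x. rcv_ev q t = Some (p, x) \<longrightarrow> (\<exists>t'<t. (q, x) \<in> snd_ev p t'))"

(* unforgeability: sigma (correct) signs only m, so every correctly signed pair
   that reaches a correct process carries m *)
definition unforgeable ::
  "'p set \<Rightarrow> ('p \<Rightarrow> 'm \<Rightarrow> 's) \<Rightarrow> 'p \<Rightarrow> 'm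
     \<Rightarrow> ('p \<Rightarrow> nat \<Rightarrow> ('p \<times> ('m,'s) smsg) option) \<Rightarrow> bool" where
  "unforgeable C sign \<sigma> m rcv_ev \<longleftrightarrow>
     (\<forall>p\<in>C. \<forall>t q y. rcv_ev p t = Some (q, Echo y) \<and> valid_sig sign \<sigma> y \<longrightarrow> fst y = m)"

(* pbd q t = Some x : correct q has pb-delivered x at or before time t *)
definition pb_instance ::
  "'p set \<Rightarrow> ('p \<Rightarrow> 'm \<Rightarrow> 's) \<Rightarrow> 'p \<Rightarrow> 'm \<Rightarrow> ('p \<Rightarrow> nat \<Rightarrow> ('m \<times> 's) option) \<Rightarrow> bool" where
  "pb_instance C sign \<sigma> m pbd \<longleftrightarrow>
     (\<forall>p\<in>C. \<forall>t t' x. pbd p t = Some x \<and> t \<le> t' \<longrightarrow> pbd p t' = Some x) \<and>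
     (\<forall>p\<in>C. \<forall>t x. pbd p t = Some x \<longrightarrow> x = (m, sign \<sigma> m)) \<and>
     (\<exists>t. pbd \<sigma> t = Some (m, sign \<sigma> m))"

definition pb_totality :: "'p set \<Rightarrow> ('p \<Rightarrow> nat \<Rightarrow> ('m \<times> 's) option) \<Rightarrow> bool" where
  "pb_totality C pbd \<longleftrightarrow>
     (\<exists>p\<in>C. \<exists>t x. pbd p t = Some x) \<longrightarrow> (\<forall>p\<in>C. \<exists>t x. pbd p t = Some x)"

definition recorded ::
  "('p \<Rightarrow> 'm \<Rightarrow> 's) \<Rightarrow> 'p \<Rightarrow> ('p \<Rightarrow> nat \<Rightarrow> ('p \<times> ('m,'s) smsg) option)
     \<Rightarrow> 'p \<Rightarrow> 'p \<Rightarrow> 'm \<times> 's \<Rightarrow> nat \<Rightarrow> bool" where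
  "recorded sign \<sigma> rcv_ev p q y t \<longleftrightarrow>
     (\<exists>t'\<le>t. rcv_ev p t' = Some (q, Echo y) \<and> valid_sig sign \<sigma> y \<and>
        (\<forall>t''<t'. \<forall>y'. rcv_ev p t'' = Some (q, Echo y') \<longrightarrow> \<not> valid_sig sign \<sigma> y'))"

definition echo_count ::
  "('p \<Rightarrow> 'm \<Rightarrow> 's) \<Rightarrow> 'p \<Rightarrow> ('p \<Rightarrow> 'p list) \<Rightarrow> ('p \<Rightarrow> nat \<Rightarrow> ('p \<times> ('m,'s) smsg) option)
     \<Rightarrow> 'p \<Rightarrow> 'm \<times> 's \<Rightarrow> nat \<Rightarrow> nat" where
  "echo_count sign \<sigma> sample rcv_ev p y t =
     card {i. i < length (sample p) \<and> recorded sign \<sigma> rcv_ev p (sample p ! i) y t}"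

(* behaviour of correct processes running Sieve; dlv p t = Some x : p has delivered x by t *)
definition sieve_correct_behaviour ::
  "'p set \<Rightarrow> ('p \<Rightarrow> 'm \<Rightarrow> 's) \<Rightarrow> 'p \<Rightarrow> nat \<Rightarrow> nat \<Rightarrow> ('p \<Rightarrow> 'p list)
     \<Rightarrow> ('p \<Rightarrow> nat \<Rightarrow> ('p \<times> ('m,'s) smsg) set)
     \<Rightarrow> ('p \<Rightarrow> nat \<Rightarrow> ('p \<times> ('m,'s) smsg) option)
     \<Rightarrow> ('p \<Rightarrow> nat \<Rightarrow> ('m \<times> 's) option) \<Rightarrow> ('p \<Rightarrow> nat \<Rightarrow> 'm option) \<Rightarrow> bool" where
  "sieve_correct_behaviour C sign \<sigma> E Ehat sample snd_ev rcv_ev pbd dlv \<longleftrightarrow>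
     (\<forall>p\<in>C. length (sample p) = E) \<and>
     \<comment> \<open>EchoSubscribe to every member of the echo sample\<close>
     (\<forall>p\<in>C. \<forall>q\<in>set (sample p). \<exists>t. (q, EchoSubscribe) \<in> snd_ev p t) \<and>
     \<comment> \<open>EchoSubscribe sent only to members of the echo sample\<close>
     (\<forall>p\<in>C. \<forall>t q. (q, EchoSubscribe) \<in> snd_ev p t \<longrightarrow> q \<in> set (sample p)) \<and>
     \<comment> \<open>after pb-delivering a correctly signed pair, Echo it to all current and future subscribers\<close>
     (\<forall>p\<in>C. \<forall>t t' x q. pbd p t = Some x \<and> valid_sig sign \<sigma> x \<and>
         rcv_ev p t' = Some (q, EchoSubscribe) \<longrightarrow>
         (\<exists>t''. t \<le> t'' \<and> t' \<le> t'' \<and> (q, Echo x) \<in> snd_ev p t'')) \<and>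
     \<comment> \<open>only the own echo is sent, only to subscribers\<close>
     (\<forall>p\<in>C. \<forall>t q y. (q, Echo y) \<in> snd_ev p t \<longrightarrow>
         pbd p t = Some y \<and> valid_sig sign \<sigma> y \<and> (\<exists>t'\<le>t. rcv_ev p t' = Some (q, EchoSubscribe))) \<and>
     \<comment> \<open>delivery happens at most once\<close>
     (\<forall>p\<in>C. \<forall>t t' x. dlv p t = Some x \<and> t \<le> t' \<longrightarrow> dlv p t' = Some x) \<and>
     \<comment> \<open>delivery rule (liveness)\<close>
     (\<forall>p\<in>C. \<forall>t x. pbd p t = Some x \<and> valid_sig sign \<sigma> x \<and>
         Ehat \<le> echo_count sign \<sigma> sample rcv_ev p x t \<longrightarrow> (\<exists>t'. dlv p t' = Some (fst x))) \<and>
     \<comment> \<open>delivery rule (safety)\<close>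
     (\<forall>p\<in>C. \<forall>t x'. dlv p t = Some x' \<longrightarrow>
         (\<exists>t'\<le>t. \<exists>x. pbd p t' = Some x \<and> valid_sig sign \<sigma> x \<and> fst x = x' \<and>
            Ehat \<le> echo_count sign \<sigma> sample rcv_ev p x t'))"

end

theory Submission
  imports Defs
begin

lemma finite_eventually_all:
  fixes P :: "'a \<Rightarrow> nat \<Rightarrow> bool"
  assumes "finite A" and "\<forall>q\<in>A. \<exists>t. \<forall>T\<ge>t. P q T"
  shows "\<exists>t. \<forall>q\<in>A. \<forall>T\<ge>t. P q T"
  using assms
proof (induction A rule: finite_induct)
  case empty then show ?case by auto
next
  case (insert x F)
  then obtain t1 where t1: "\<forall>q\<in>F. \<forall>T\<ge>t1. P q T" by auto
  from insert obtain t2 where t2: "\<forall>T\<ge>t2. P x T" by auto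
  have "\<forall>q\<in>insert x F. \<forall>T\<ge>max t1 t2. P q T"
  proof (intro ballI allI impI)
    fix q T assume "q \<in> insert x F" "max t1 t2 \<le> T"
    then show "P q T" using t1 t2 by (cases "q = x") auto
  qed
  then show ?case by blast
qed

theorem lemma5:
  fixes C :: "'p set" and \<sigma> :: 'p and m :: 'm and sign :: "'p \<Rightarrow> 'm \<Rightarrow> 's"
    and E Ehat :: nat and sample :: "'p \<Rightarrow> 'p list"
    and snd_ev :: "'p \<Rightarrow> nat \<Rightarrow> ('p \<times> ('m,'s) smsg) set"
    and rcv_ev :: "'p \<Rightarrow> nat \<Rightarrow> ('p \<times> ('m,'s) smsg) option"
    and pbd :: "'p \<Rightarrow> nat \<Rightarrow> ('m \<times> 's) option"
    and dlv :: "'p \<Rightarrow> nat \<Rightarrow> 'm option"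
  assumes sender_correct: "\<sigma> \<in> C"
    and links: "reliable_authenticated_links C snd_ev rcv_ev"
    and unforg: "unforgeable C sign \<sigma> m rcv_ev"
    and pb: "pb_instance C sign \<sigma> m pbd"
    and sieve: "sieve_correct_behaviour C sign \<sigma> E Ehat sample snd_ev rcv_ev pbd dlv"
    and totality: "pb_totality C pbd"
    and few_byz: "\<forall>p\<in>C. int (length (filter (\<lambda>q. q \<notin> C) (sample p))) \<le> int E - int Ehat"
  shows "\<forall>p\<in>C. \<exists>t. dlv p t = Some m"
proof
  fix p assume pC: "p \<in> C"
  define y where "y = (m, sign \<sigma> m)"
  have vy: "valid_sig sign \<sigma> y" unfolding y_def valid_sig_def by simp
  have pbmono: "\<forall>p\<in>C. \<forall>t t' x. pbd p t = Some x \<and> t \<le> t' \<longrightarrow> pbd p t' = Some x"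
    and pbval: "\<forall>p\<in>C. \<forall>t x. pbd p t = Some x \<longrightarrow> x = (m, sign \<sigma> m)"
    and pbs: "\<exists>t. pbd \<sigma> t = Some (m, sign \<sigma> m)"
    using pb unfolding pb_instance_def by blast+
  have allpb: "\<forall>q\<in>C. \<exists>t. pbd q t = Some y"
  proof
    fix q assume "q \<in> C"
    with totality pbs sender_correct obtain t x where "pbd q t = Some x"
      unfolding pb_totality_def by blast
    with pbval \<open>q \<in> C\<close> show "\<exists>t. pbd q t = Some y" unfolding y_def by blast
  qed
  have L1: "\<forall>p\<in>C. \<forall>q\<in>C. \<forall>t x. (q, x) \<in> snd_ev p t \<longrightarrow> (\<exists>t'>t. rcv_ev q t' = Some (p, x))"
    using links unfolding reliable_authenticated_links_def by blast
  have SS: "(\<forall>p\<in>C. length (sample p) = E) \<and> (\<forall>p\<in>C. \<forall>q\<in>set (sample p). \<exists>t. (q, EchoSubscribe) \<in> snd_ev p t)"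
    using sieve unfolding sieve_correct_behaviour_def by (elim conjE) (intro conjI)
  have S1: "\<forall>p\<in>C. length (sample p) = E" using SS by (rule conjunct1)
  have S2: "\<forall>p\<in>C. \<forall>q\<in>set (sample p). \<exists>t. (q, EchoSubscribe) \<in> snd_ev p t" using SS by (rule conjunct2)
  have S4: "\<forall>p\<in>C. \<forall>t t' x q. pbd p t = Some x \<and> valid_sig sign \<sigma> x \<and>
         rcv_ev p t' = Some (q, EchoSubscribe) \<longrightarrow>
         (\<exists>t''. t \<le> t'' \<and> t' \<le> t'' \<and> (q, Echo x) \<in> snd_ev p t'')"
    using sieve unfolding sieve_correct_behaviour_def by (elim conjE) assumption
  have S7: "\<forall>p\<in>C. \<forall>t x. pbd p t = Some x \<and> valid_sig sign \<sigma> x \<and>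
         Ehat \<le> echo_count sign \<sigma> sample rcv_ev p x t \<longrightarrow> (\<exists>t'. dlv p t' = Some (fst x))"
    using sieve unfolding sieve_correct_behaviour_def by (elim conjE) assumption
  have rec_ev: "\<forall>q\<in>set (sample p) \<inter> C. \<exists>t. \<forall>T\<ge>t. recorded sign \<sigma> rcv_ev p q y T"
  proof
    fix q assume q: "q \<in> set (sample p) \<inter> C"
    then obtain t0 where "(q, EchoSubscribe) \<in> snd_ev p t0" using S2 pC by blast
    then obtain t1 where t1: "rcv_ev q t1 = Some (p, EchoSubscribe)" using L1 pC q by blast
    obtain tq where tq: "pbd q tq = Some y" using allpb q by blast
    obtain t2 where "(p, Echo y) \<in> snd_ev q t2" using S4 q tq vy t1 by blast
    then obtain t3 where t3: "rcv_ev p t3 = Some (q, Echo y)" using L1 pC q by blast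
    define R where "R = (\<lambda>t. \<exists>y'. rcv_ev p t = Some (q, Echo y') \<and> valid_sig sign \<sigma> y')"
    have Rt3: "R t3" unfolding R_def using t3 vy by blast
    define tf where "tf = (LEAST t. R t)"
    have Rtf: "R tf" unfolding tf_def using Rt3 by (rule LeastI)
    have tfle: "tf \<le> t3" unfolding tf_def using Rt3 by (rule Least_le)
    have before: "\<forall>t''<tf. \<forall>y'. rcv_ev p t'' = Some (q, Echo y') \<longrightarrow> \<not> valid_sig sign \<sigma> y'"
      using not_less_Least[of _ R] unfolding tf_def R_def by blast
    obtain y' where y': "rcv_ev p tf = Some (q, Echo y')" "valid_sig sign \<sigma> y'"
      using Rtf unfolding R_def by blast
    have "fst y' = m" using unforg pC y' unfolding unforgeable_def by blast
    then have "y' = y" using y'(2) unfolding valid_sig_def y_def by (simp add: prod_eq_iff)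
    have "recorded sign \<sigma> rcv_ev p q y T" if "tf \<le> T" for T
      unfolding recorded_def using y' before \<open>y' = y\<close> that by blast
    then show "\<exists>t. \<forall>T\<ge>t. recorded sign \<sigma> rcv_ev p q y T" by blast
  qed
  obtain T1 where T1: "\<forall>q\<in>set (sample p) \<inter> C. \<forall>T\<ge>T1. recorded sign \<sigma> rcv_ev p q y T"
    using finite_eventually_all[OF _ rec_ev] by blast
  obtain tp where tp: "pbd p tp = Some y" using allpb pC by blast
  define T where "T = max T1 tp"
  have "tp \<le> T" unfolding T_def by simp
  then have pT: "pbd p T = Some y" using pbmono pC tp by blast
  have sub: "{i. i < length (sample p) \<and> sample p ! i \<in> C}
      \<subseteq> {i. i < length (sample p) \<and> recorded sign \<sigma> rcv_ev p (sample p ! i) y T}"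
  proof
    fix i assume "i \<in> {i. i < length (sample p) \<and> sample p ! i \<in> C}"
    then have "i < length (sample p)" "sample p ! i \<in> set (sample p) \<inter> C" by auto
    moreover have "T1 \<le> T" unfolding T_def by simp
    ultimately show "i \<in> {i. i < length (sample p) \<and> recorded sign \<sigma> rcv_ev p (sample p ! i) y T}"
      using T1 by blast
  qed
  have "length (filter (\<lambda>q. q \<in> C) (sample p)) \<le> echo_count sign \<sigma> sample rcv_ev p y T"
    unfolding echo_count_def length_filter_conv_card
    by (rule card_mono[OF _ sub]) simp
  moreover have "length (filter (\<lambda>q. q \<in> C) (sample p)) + length (filter (\<lambda>q. q \<notin> C) (sample p)) = E"
    using sum_length_filter_compl[of "\<lambda>q. q \<in> C" "sample p"] S1 pC by simp
  moreover have "int (length (filter (\<lambda>q. q \<notin> C) (sample p))) \<le> int E - int Ehat"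
    using few_byz pC by blast
  ultimately have "Ehat \<le> echo_count sign \<sigma> sample rcv_ev p y T" by linarith
  then obtain t' where "dlv p t' = Some (fst y)" using S7 pC pT vy by blast
  then show "\<exists>t. dlv p t = Some m" unfolding y_def by auto
qed

end
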